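(* There is no countable graph $U$ such that $U$ has no $K_\infty$ minor and every countable graph with no $K_\infty$ minor is a minor of $U$.
   Context: Graphs may be infinite. $K_\infty$ denotes the complete graph on countably infinitely many vertices. A graph $H$ is a minor of a graph $G$ (written $H<G$) if there are pairwise disjoint connected subgraphs $B_v\subseteq G$, $v\in V(H)$ (branch sets), and for every edge $uv\in E(H)$ an edge of $G$ with one endvertex in $B_u$ and the other in $B_v$. A graph is $K_\infty$-minor-free if $K_\infty$ is not a minor of it. *)

theory Defs
  imports Main "HOL-Library.Countable_Set"
begin

definition graph :: "'a set \<Rightarrow> ('a \<Rightarrow> 'a \<Rightarrow> bool) \<Rightarrow> bool" where
  "graph V E \<longleftrightarrow> (\<forall>u v. E u v \<longrightarrow> u \<in> V \<and> v \<in> V \<and> u \<noteq> v \<and> E v u)"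

definition connected_in :: "'a set \<Rightarrow> ('a \<Rightarrow> 'a \<Rightarrow> bool) \<Rightarrow> 'a set \<Rightarrow> bool" where
  "connected_in V E B \<longleftrightarrow> B \<noteq> {} \<and> B \<subseteq> V \<and>
     (\<forall>x\<in>B. \<forall>y\<in>B. (\<lambda>a b. E a b \<and> a \<in> B \<and> b \<in> B)\<^sup>*\<^sup>* x y)"

definition is_minor ::
  "'b set \<Rightarrow> ('b \<Rightarrow> 'b \<Rightarrow> bool) \<Rightarrow> 'a set \<Rightarrow> ('a \<Rightarrow> 'a \<Rightarrow> bool) \<Rightarrow> bool" where
  "is_minor VH EH VG EG \<longleftrightarrow>
     (\<exists>B :: 'b \<Rightarrow> 'a set.
        (\<forall>v\<in>VH. connected_in VG EG (B v)) \<and>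
        (\<forall>u\<in>VH. \<forall>v\<in>VH. u \<noteq> v \<longrightarrow> B u \<inter> B v = {}) \<and>
        (\<forall>u v. EH u v \<longrightarrow> (\<exists>x\<in>B u. \<exists>y\<in>B v. EG x y)))"

definition Kinf_minor_free :: "'a set \<Rightarrow> ('a \<Rightarrow> 'a \<Rightarrow> bool) \<Rightarrow> bool" where
  "Kinf_minor_free V E \<longleftrightarrow> \<not> is_minor (UNIV :: nat set) (\<lambda>x y. x \<noteq> y) V E"

end

theory Submission
  imports Defs
begin

definition mstep :: "'a set \<Rightarrow> ('a \<Rightarrow> 'a set) \<Rightarrow> 'a set \<Rightarrow> 'a set" where
  "mstep V M X = (\<Union>w\<in>X \<inter> V. M w)"

lemma conn_ne: "connected_in V E B \<Longrightarrow> B \<noteq> {}"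
  unfolding connected_in_def by (elim conjE)

lemma conn_sub: "connected_in V E B \<Longrightarrow> B \<subseteq> V"
  unfolding connected_in_def by (elim conjE)

lemma conn_path: "connected_in V E B \<Longrightarrow> x \<in> B \<Longrightarrow> y \<in> B \<Longrightarrow>
    (\<lambda>a b. E a b \<and> a \<in> B \<and> b \<in> B)\<^sup>*\<^sup>* x y"
  unfolding connected_in_def by (elim conjE) (drule bspec, assumption, drule bspec, assumption)

lemma rt_restrict_mono:
  assumes "S \<subseteq> T" "(\<lambda>a b. E a b \<and> a \<in> S \<and> b \<in> S)\<^sup>*\<^sup>* x y"
  shows "(\<lambda>a b. E a b \<and> a \<in> T \<and> b \<in> T)\<^sup>*\<^sup>* x y"
  using assms(2) by (rule rtranclp_mono[THEN predicate2D, rotated]) (use assms(1) in auto)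

lemma mstep_disj:
  assumes "\<forall>w\<in>V. \<forall>w'\<in>V. w \<noteq> w' \<longrightarrow> M w \<inter> M w' = {}" "X \<inter> Y = {}"
  shows "mstep V M X \<inter> mstep V M Y = {}"
proof -
  { fix z assume "z \<in> mstep V M X" "z \<in> mstep V M Y"
    then obtain w w' where "w \<in> X \<inter> V" "w' \<in> Y \<inter> V" "z \<in> M w" "z \<in> M w'"
      unfolding mstep_def by blast
    moreover then have "w \<noteq> w'" using assms(2) by blast
    ultimately have False using assms(1) by blast }
  then show ?thesis by blast
qed

lemma mstep_disj_iter:
  assumes "\<forall>w\<in>V. \<forall>w'\<in>V. w \<noteq> w' \<longrightarrow> M w \<inter> M w' = {}" "X \<inter> Y = {}"
  shows "(mstep V M ^^ n) X \<inter> (mstep V M ^^ n) Y = {}"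
proof (induction n)
  case 0 then show ?case using assms(2) by simp
next
  case (Suc n) then show ?case using mstep_disj[OF assms(1)] by simp
qed

lemma mstep_adj:
  assumes "graph V E" "\<forall>u v. E u v \<longrightarrow> (\<exists>x\<in>M u. \<exists>y\<in>M v. E x y)"
    "\<exists>x\<in>X. \<exists>y\<in>Y. E x y"
  shows "\<exists>x\<in>mstep V M X. \<exists>y\<in>mstep V M Y. E x y"
proof -
  obtain x y where xy: "x \<in> X" "y \<in> Y" "E x y" using assms(3) by blast
  then have "x \<in> V" "y \<in> V" using assms(1) unfolding graph_def by auto
  moreover obtain p q where "p \<in> M x" "q \<in> M y" "E p q" using assms(2) xy by blast
  ultimately show ?thesis using xy unfolding mstep_def by blast
qed

lemma mstep_adj_iter:
  assumes "graph V E" "\<forall>u v. E u v \<longrightarrow> (\<exists>x\<in>M u. \<exists>y\<in>M v. E x y)"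
    "\<exists>x\<in>X. \<exists>y\<in>Y. E x y"
  shows "\<exists>x\<in>(mstep V M ^^ n) X. \<exists>y\<in>(mstep V M ^^ n) Y. E x y"
  using assms(3) by (induction n) (auto intro: mstep_adj[OF assms(1,2)])

lemma mstep_conn:
  assumes "graph V E" "\<forall>u v. E u v \<longrightarrow> (\<exists>x\<in>M u. \<exists>y\<in>M v. E x y)"
    "\<forall>w\<in>V. connected_in V E (M w)" "connected_in V E X"
  shows "connected_in V E (mstep V M X)"
proof -
  let ?Y = "mstep V M X"
  have XV: "X \<noteq> {}" "X \<subseteq> V" using conn_ne[OF assms(4)] conn_sub[OF assms(4)] by auto
  have ne: "?Y \<noteq> {}"
  proof -
    obtain x where "x \<in> X" using XV by blast
    then have "x \<in> V" using XV by blast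
    then have "M x \<noteq> {}" using assms(3) conn_ne by blast
    then show ?thesis using \<open>x \<in> X\<close> \<open>x \<in> V\<close> unfolding mstep_def by blast
  qed
  have sub: "?Y \<subseteq> V"
    using assms(3) conn_sub unfolding mstep_def by blast
  have MY: "M w \<subseteq> ?Y" if "w \<in> X" "w \<in> V" for w using that unfolding mstep_def by blast
  have path: "\<forall>c\<in>M y. (\<lambda>a b. E a b \<and> a \<in> ?Y \<and> b \<in> ?Y)\<^sup>*\<^sup>* a c"
    if "x \<in> X" "a \<in> M x" and r: "(\<lambda>a b. E a b \<and> a \<in> X \<and> b \<in> X)\<^sup>*\<^sup>* x y" for x y a
    using r
  proof (induction rule: rtranclp_induct)
    case base
    have "x \<in> V" using that(1) XV(2) by blast
    then have "connected_in V E (M x)" using assms(3) by blast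
    show ?case
    proof
      fix c assume c: "c \<in> M x"
      have "(\<lambda>a b. E a b \<and> a \<in> M x \<and> b \<in> M x)\<^sup>*\<^sup>* a c"
        by (rule conn_path[OF \<open>connected_in V E (M x)\<close> that(2) c])
      then show "(\<lambda>a b. E a b \<and> a \<in> ?Y \<and> b \<in> ?Y)\<^sup>*\<^sup>* a c"
        by (rule rt_restrict_mono[rotated]) (rule MY[OF \<open>x \<in> X\<close> \<open>x \<in> V\<close>])
    qed
  next
    case (step y z)
    have yz: "E y z" "y \<in> X" "z \<in> X" using step.hyps(2) by simp_all
    then have yzV: "y \<in> V" "z \<in> V" using XV(2) by blast+
    obtain p q where pq: "p \<in> M y" "q \<in> M z" "E p q" using assms(2) yz(1) by blast
    have 1: "(\<lambda>a b. E a b \<and> a \<in> ?Y \<and> b \<in> ?Y)\<^sup>*\<^sup>* a p" using step.IH pq(1) by blast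
    have pY: "p \<in> ?Y" "q \<in> ?Y" using MY[OF yz(2) yzV(1)] MY[OF yz(3) yzV(2)] pq(1,2) by blast+
    show ?case
    proof
      fix c assume c: "c \<in> M z"
      have "connected_in V E (M z)" using assms(3) yzV(2) by blast
      then have "(\<lambda>a b. E a b \<and> a \<in> M z \<and> b \<in> M z)\<^sup>*\<^sup>* q c"
        by (rule conn_path[OF _ pq(2) c])
      then have 2: "(\<lambda>a b. E a b \<and> a \<in> ?Y \<and> b \<in> ?Y)\<^sup>*\<^sup>* q c"
        by (rule rt_restrict_mono[rotated]) (rule MY[OF yz(3) yzV(2)])
      have "(\<lambda>a b. E a b \<and> a \<in> ?Y \<and> b \<in> ?Y)\<^sup>*\<^sup>* a q"
        by (rule rtranclp.rtrancl_into_rtrancl[OF 1]) (simp add: pY pq(3))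
      then show "(\<lambda>a b. E a b \<and> a \<in> ?Y \<and> b \<in> ?Y)\<^sup>*\<^sup>* a c"
        by (rule rtranclp_trans[OF _ 2])
    qed
  qed
  show ?thesis unfolding connected_in_def
  proof (intro conjI ne sub ballI)
    fix a c assume "a \<in> ?Y" "c \<in> ?Y"
    then obtain x y where xy: "x \<in> X" "a \<in> M x" "y \<in> X" "c \<in> M y"
      unfolding mstep_def by blast
    have r: "(\<lambda>a b. E a b \<and> a \<in> X \<and> b \<in> X)\<^sup>*\<^sup>* x y"
      by (rule conn_path[OF assms(4) xy(1) xy(3)])
    show "(\<lambda>a b. E a b \<and> a \<in> ?Y \<and> b \<in> ?Y)\<^sup>*\<^sup>* a c"
      using path[OF xy(1) xy(2) r] xy(4) by blast
  qed
qed

lemma mstep_conn_iter: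
  assumes "graph V E" "\<forall>u v. E u v \<longrightarrow> (\<exists>x\<in>M u. \<exists>y\<in>M v. E x y)"
    "\<forall>w\<in>V. connected_in V E (M w)" "connected_in V E X"
  shows "connected_in V E ((mstep V M ^^ n) X)"
  using assms(4) by (induction n) (auto intro: mstep_conn[OF assms(1,2,3)])

lemma no_cone_model:
  assumes g: "graph V E" and adj: "\<forall>u v. E u v \<longrightarrow> (\<exists>x\<in>M u. \<exists>y\<in>M v. E x y)"
    and Mc: "\<forall>w\<in>V. connected_in V E (M w)" and Ac: "connected_in V E A"
    and AM: "\<forall>w\<in>V. A \<inter> M w = {}"
    and Md: "\<forall>w\<in>V. \<forall>w'\<in>V. w \<noteq> w' \<longrightarrow> M w \<inter> M w' = {}"
    and apex: "\<forall>w\<in>V. \<exists>x\<in>A. \<exists>y\<in>M w. E x y"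
  shows "\<not> Kinf_minor_free V E"
proof -
  define C where "C n = (mstep V M ^^ n) A" for n
  have conn: "connected_in V E (C n)" for n
    unfolding C_def by (rule mstep_conn_iter[OF g adj Mc Ac])
  have split: "C (n + Suc m) = (mstep V M ^^ n) (mstep V M (C m))" for n m
    unfolding C_def by (simp only: funpow_add comp_apply funpow.simps(2))
  have disj: "C n \<inter> C (n + Suc m) = {}" for n m
  proof -
    have "A \<inter> mstep V M (C m) = {}" using AM unfolding mstep_def by blast
    then have "(mstep V M ^^ n) A \<inter> (mstep V M ^^ n) (mstep V M (C m)) = {}"
      by (rule mstep_disj_iter[OF Md])
    then show ?thesis unfolding split by (simp only: C_def)
  qed
  have adjC: "\<exists>x\<in>C n. \<exists>y\<in>C (n + Suc m). E x y" for n m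
  proof -
    obtain z where z: "z \<in> C m" using conn_ne[OF conn[of m]] by blast
    then have zV: "z \<in> V" using conn_sub[OF conn[of m]] by blast
    have "M z \<subseteq> mstep V M (C m)" using z zV unfolding mstep_def by blast
    then have "\<exists>x\<in>A. \<exists>y\<in>mstep V M (C m). E x y" using apex zV by blast
    then have "\<exists>x\<in>(mstep V M ^^ n) A. \<exists>y\<in>(mstep V M ^^ n) (mstep V M (C m)). E x y"
      by (rule mstep_adj_iter[OF g adj])
    then show ?thesis unfolding split by (simp only: C_def)
  qed
  have "is_minor (UNIV :: nat set) (\<lambda>x y. x \<noteq> y) V E"
    unfolding is_minor_def
  proof (intro exI[of _ C] conjI ballI allI impI)
    fix v :: nat show "connected_in V E (C v)" by (rule conn)
  next
    fix u v :: nat assume "u \<noteq> v"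
    then consider "\<exists>m. v = u + Suc m" | "\<exists>m. u = v + Suc m"
    proof (cases "u < v")
      case True then show ?thesis using that less_imp_Suc_add[OF True] by auto
    next
      case False then have "v < u" using \<open>u \<noteq> v\<close> by simp
      then show ?thesis using that less_imp_Suc_add[of v u] by auto
    qed
    then show "C u \<inter> C v = {}"
    proof cases
      case 1 then show ?thesis using disj by blast
    next
      case 2 then obtain m where "u = v + Suc m" by blast
      then show ?thesis using disj[of v m] by (simp add: Int_commute)
    qed
  next
    fix u v :: nat assume "u \<noteq> v"
    then consider "\<exists>m. v = u + Suc m" | "\<exists>m. u = v + Suc m"
    proof (cases "u < v")
      case True then show ?thesis using that less_imp_Suc_add[OF True] by auto
    next
      case False then have "v < u" using \<open>u \<noteq> v\<close> by simp
      then show ?thesis using that less_imp_Suc_add[of v u] by auto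
    qed
    then show "\<exists>x\<in>C u. \<exists>y\<in>C v. E x y"
    proof cases
      case 1 then show ?thesis using adjC by blast
    next
      case 2 then obtain m where "u = v + Suc m" by blast
      then show ?thesis using adjC[of v m] g unfolding graph_def by blast
    qed
  qed
  then show ?thesis unfolding Kinf_minor_free_def by blast
qed


lemma pull_Kinf:
  fixes C :: "nat \<Rightarrow> 'b set" and N :: nat
  assumes Cc: "\<forall>i. connected_in VG EG (C i)"
    and Cd: "\<forall>i j. i \<noteq> j \<longrightarrow> C i \<inter> C j = {}"
    and Ca: "\<forall>i j. i \<noteq> j \<longrightarrow> (\<exists>x\<in>C i. \<exists>y\<in>C j. EG x y)"
    and CN: "\<forall>i\<ge>N. C i \<subseteq> g ` W"
    and inj: "inj_on g W"
    and E: "\<forall>a\<in>W. \<forall>b\<in>W. EG (g a) (g b) \<longrightarrow> EW a b"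
  shows "\<not> Kinf_minor_free W EW"
proof -
  define D where "D j = {u \<in> W. g u \<in> C (j + N)}" for j :: nat
  have img: "g ` D j = C (j + N)" for j
  proof
    show "g ` D j \<subseteq> C (j + N)" unfolding D_def by auto
    have "C (j + N) \<subseteq> g ` W" using CN by simp
    then show "C (j + N) \<subseteq> g ` D j" unfolding D_def by blast
  qed
  have conn: "connected_in W EW (D j)" for j
  proof -
    let ?S = "C (j + N)"
    have "C (j + N) \<noteq> {}" using Cc conn_ne by blast
    then have ne: "D j \<noteq> {}" using img[of j] by auto
    have path: "\<forall>y\<in>W. g y = b \<longrightarrow> (\<lambda>a b. EW a b \<and> a \<in> D j \<and> b \<in> D j)\<^sup>*\<^sup>* x y"
      if "x \<in> D j" and r: "(\<lambda>a b. EG a b \<and> a \<in> ?S \<and> b \<in> ?S)\<^sup>*\<^sup>* (g x) b" for x b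
      using r
    proof (induction rule: rtranclp_induct)
      case base
      show ?case
      proof (intro ballI impI)
        fix y assume y: "y \<in> W" "g y = g x"
        have "x \<in> W" using that(1) unfolding D_def by blast
        then have "y = x" using inj_onD[OF inj y(2) y(1)] by blast
        then show "(\<lambda>a b. EW a b \<and> a \<in> D j \<and> b \<in> D j)\<^sup>*\<^sup>* x y" by simp
      qed
    next
      case (step b c)
      have bc: "EG b c" "b \<in> ?S" "c \<in> ?S" using step.hyps(2) by simp_all
      have "C (j + N) \<subseteq> g ` W" using CN by simp
      then obtain b' where b': "b' \<in> W" "g b' = b" using bc by blast
      have 1: "(\<lambda>a b. EW a b \<and> a \<in> D j \<and> b \<in> D j)\<^sup>*\<^sup>* x b'" using step.IH b' by blast
      show ?case
      proof (intro ballI impI)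
        fix y assume y: "y \<in> W" "g y = c"
        have "EG (g b') (g y)" using bc(1) b'(2) y(2) by simp
        then have "EW b' y" using E b'(1) y(1) by blast
        moreover have "b' \<in> D j" "y \<in> D j" using b' y bc unfolding D_def by auto
        ultimately have st: "EW b' y \<and> b' \<in> D j \<and> y \<in> D j" by blast
        show "(\<lambda>a b. EW a b \<and> a \<in> D j \<and> b \<in> D j)\<^sup>*\<^sup>* x y"
          by (rule rtranclp.rtrancl_into_rtrancl[OF 1]) (simp add: st)
      qed
    qed
    show ?thesis unfolding connected_in_def
    proof (intro conjI ne ballI)
      show "D j \<subseteq> W" unfolding D_def by auto
    next
      fix x y assume xy: "x \<in> D j" "y \<in> D j"
      then have gxy: "g x \<in> ?S" "g y \<in> ?S" "y \<in> W" unfolding D_def by auto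
      have rr: "(\<lambda>a b. EG a b \<and> a \<in> ?S \<and> b \<in> ?S)\<^sup>*\<^sup>* (g x) (g y)"
        by (rule conn_path[OF spec[OF Cc] gxy(1) gxy(2)])
      show "(\<lambda>a b. EW a b \<and> a \<in> D j \<and> b \<in> D j)\<^sup>*\<^sup>* x y"
        using path[OF xy(1) rr] gxy(3) by blast
    qed
  qed
  have "is_minor (UNIV :: nat set) (\<lambda>x y. x \<noteq> y) W EW"
    unfolding is_minor_def
  proof (intro exI[of _ D] conjI ballI allI impI)
    fix v :: nat show "connected_in W EW (D v)" by (rule conn)
  next
    fix u v :: nat assume "u \<noteq> v"
    then have "u + N \<noteq> v + N" by simp
    then have "C (u + N) \<inter> C (v + N) = {}" using Cd by blast
    then show "D u \<inter> D v = {}" unfolding D_def by blast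
  next
    fix u v :: nat assume "u \<noteq> v"
    then have "u + N \<noteq> v + N" by simp
    then obtain x y where xy: "x \<in> C (u + N)" "y \<in> C (v + N)" "EG x y" using Ca by blast
    then have "x \<in> g ` D u" "y \<in> g ` D v" using img by simp_all
    then obtain a b where "a \<in> D u" "b \<in> D v" "x = g a" "y = g b"
      by blast
    moreover then have "a \<in> W" "b \<in> W" unfolding D_def by auto
    ultimately show "\<exists>x\<in>D u. \<exists>y\<in>D v. EW x y" using E xy by blast
  qed
  then show ?thesis unfolding Kinf_minor_free_def by blast
qed

theorem theorem1p3:
  shows "\<not> (\<exists>(VU :: 'a set) EU.
            graph VU EU \<and> countable VU \<and> Kinf_minor_free VU EU \<and>
            (\<forall>(VG :: nat set) EG. graph VG EG \<and> Kinf_minor_free VG EG \<longrightarrow>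
                is_minor VG EG VU EU))"
proof
  assume "\<exists>(VU :: 'a set) EU.
            graph VU EU \<and> countable VU \<and> Kinf_minor_free VU EU \<and>
            (\<forall>(VG :: nat set) EG. graph VG EG \<and> Kinf_minor_free VG EG \<longrightarrow>
                is_minor VG EG VU EU)"
  then obtain VU :: "'a set" and EU where gU: "graph VU EU" and cU: "countable VU"
    and fU: "Kinf_minor_free VU EU"
    and univ: "\<And>(VG :: nat set) EG. graph VG EG \<Longrightarrow> Kinf_minor_free VG EG \<Longrightarrow>
                is_minor VG EG VU EU" by blast
  define g where "g u = Suc (to_nat_on VU u)" for u
  have inj: "inj_on g VU" using inj_on_to_nat_on[OF cU] unfolding g_def inj_on_def by auto
  define VG where "VG = insert 0 (g ` VU)"
  define EG where "EG a b = ((a = 0 \<and> b \<in> g ` VU) \<or> (b = 0 \<and> a \<in> g ` VU) \<or>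
      (\<exists>u\<in>VU. \<exists>v\<in>VU. a = g u \<and> b = g v \<and> EU u v))" for a b
  have g0: "g u \<noteq> 0" for u unfolding g_def by simp
  have EGg: "EU a b" if "a \<in> VU" "b \<in> VU" "EG (g a) (g b)" for a b
  proof -
    have "\<exists>u\<in>VU. \<exists>v\<in>VU. g a = g u \<and> g b = g v \<and> EU u v"
      using that(3) g0 unfolding EG_def by simp
    then obtain u v where uv: "u \<in> VU" "v \<in> VU" "g a = g u" "g b = g v" "EU u v" by blast
    have "a = u" using inj_onD[OF inj uv(3) that(1) uv(1)] .
    moreover have "b = v" using inj_onD[OF inj uv(4) that(2) uv(2)] .
    ultimately show ?thesis using uv(5) by simp
  qed
  have graphG: "graph VG EG"
    unfolding graph_def
  proof (intro allI impI)
    fix a b assume e: "EG a b"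
    have e': "(a = 0 \<and> b \<in> g ` VU) \<or> (b = 0 \<and> a \<in> g ` VU) \<or>
      (\<exists>u\<in>VU. \<exists>v\<in>VU. a = g u \<and> b = g v \<and> EU u v)" using e unfolding EG_def by simp
    then show "a \<in> VG \<and> b \<in> VG \<and> a \<noteq> b \<and> EG b a"
    proof (elim disjE)
      assume h: "a = 0 \<and> b \<in> g ` VU"
      have "a \<in> VG" "b \<in> VG" using h unfolding VG_def by auto
      moreover have "a \<noteq> b" using h g0 by (metis imageE)
      moreover have "EG b a" using h unfolding EG_def by simp
      ultimately show ?thesis by simp
    next
      assume h: "b = 0 \<and> a \<in> g ` VU"
      have "a \<in> VG" "b \<in> VG" using h unfolding VG_def by auto
      moreover have "a \<noteq> b" using h g0 by (metis imageE)
      moreover have "EG b a" using h unfolding EG_def by simp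
      ultimately show ?thesis by simp
    next
      assume "\<exists>u\<in>VU. \<exists>v\<in>VU. a = g u \<and> b = g v \<and> EU u v"
      then obtain u v where uv: "u \<in> VU" "v \<in> VU" "a = g u" "b = g v" "EU u v" by blast
      have "u \<noteq> v" "EU v u" using uv(5) gU unfolding graph_def by auto
      then have "g u \<noteq> g v" using inj uv(1,2) by (auto dest: inj_onD)
      moreover have "EG b a" unfolding EG_def using uv \<open>EU v u\<close> by blast
      ultimately show ?thesis using uv unfolding VG_def by auto
    qed
  qed
  have freeG: "Kinf_minor_free VG EG"
  proof (rule ccontr)
    assume "\<not> Kinf_minor_free VG EG"
    then have "is_minor (UNIV :: nat set) (\<lambda>x y. x \<noteq> y) VG EG"
      unfolding Kinf_minor_free_def by simp
    then obtain C :: "nat \<Rightarrow> nat set" where Cc': "\<forall>i\<in>UNIV. connected_in VG EG (C i)"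
      and Cd': "\<forall>i\<in>UNIV. \<forall>j\<in>UNIV. i \<noteq> j \<longrightarrow> C i \<inter> C j = {}"
      and Ca: "\<forall>i j. i \<noteq> j \<longrightarrow> (\<exists>x\<in>C i. \<exists>y\<in>C j. EG x y)"
      unfolding is_minor_def by blast
    have Cc: "\<forall>i. connected_in VG EG (C i)" using Cc' by simp
    have Cd: "\<forall>i j. i \<noteq> j \<longrightarrow> C i \<inter> C j = {}" using Cd' by simp
    define N where "N = (if \<exists>i. 0 \<in> C i then Suc (SOME i. 0 \<in> C i) else 0)"
    have "\<forall>i\<ge>N. C i \<subseteq> g ` VU"
    proof (intro allI impI)
      fix i assume "N \<le> i"
      have "0 \<notin> C i"
      proof (cases "\<exists>i. 0 \<in> C i")
        case True
        then have "0 \<in> C (SOME i. 0 \<in> C i)" by (rule someI_ex)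
        moreover have "N = Suc (SOME i. 0 \<in> C i)" by (simp only: N_def if_P[OF True])
        then have "i \<noteq> (SOME i. 0 \<in> C i)" using \<open>N \<le> i\<close> by linarith
        ultimately show ?thesis using Cd by blast
      qed auto
      moreover have "C i \<subseteq> VG" using Cc conn_sub by blast
      ultimately show "C i \<subseteq> g ` VU" unfolding VG_def by auto
    qed
    then have "\<not> Kinf_minor_free VU EU"
      by (rule pull_Kinf[OF Cc Cd Ca _ inj]) (use EGg in blast)
    then show False using fU by blast
  qed
  obtain B where Bc: "\<forall>v\<in>VG. connected_in VU EU (B v)"
    and Bd: "\<forall>u\<in>VG. \<forall>v\<in>VG. u \<noteq> v \<longrightarrow> B u \<inter> B v = {}"
    and Ba: "\<forall>u v. EG u v \<longrightarrow> (\<exists>x\<in>B u. \<exists>y\<in>B v. EU x y)"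
    using univ[OF graphG freeG] unfolding is_minor_def by blast
  have "\<not> Kinf_minor_free VU EU"
  proof (rule no_cone_model[OF gU, of "\<lambda>w. B (g w)" "B 0"])
    show "\<forall>u v. EU u v \<longrightarrow> (\<exists>x\<in>B (g u). \<exists>y\<in>B (g v). EU x y)"
    proof (intro allI impI)
      fix u v assume "EU u v"
      then have "u \<in> VU" "v \<in> VU" using gU unfolding graph_def by auto
      then have "EG (g u) (g v)" using \<open>EU u v\<close> unfolding EG_def by blast
      then show "\<exists>x\<in>B (g u). \<exists>y\<in>B (g v). EU x y" using Ba by blast
    qed
    show "\<forall>w\<in>VU. connected_in VU EU (B (g w))" using Bc unfolding VG_def by auto
    show "connected_in VU EU (B 0)" using Bc unfolding VG_def by auto
    show "\<forall>w\<in>VU. B 0 \<inter> B (g w) = {}" 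
    proof
      fix w assume "w \<in> VU"
      then have "g w \<in> VG" "0 \<in> VG" unfolding VG_def by auto
      then show "B 0 \<inter> B (g w) = {}" using Bd g0[of w] by metis
    qed
    show "\<forall>w\<in>VU. \<forall>w'\<in>VU. w \<noteq> w' \<longrightarrow> B (g w) \<inter> B (g w') = {}"
    proof (intro ballI impI)
      fix w w' assume "w \<in> VU" "w' \<in> VU" "w \<noteq> w'"
      then have "g w \<noteq> g w'" using inj by (auto dest: inj_onD)
      moreover have "g w \<in> VG" "g w' \<in> VG" using \<open>w \<in> VU\<close> \<open>w' \<in> VU\<close> unfolding VG_def by auto
      ultimately show "B (g w) \<inter> B (g w') = {}" using Bd by blast
    qed
    show "\<forall>w\<in>VU. \<exists>x\<in>B 0. \<exists>y\<in>B (g w). EU x y"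
    proof
      fix w assume "w \<in> VU"
      then have "EG 0 (g w)" unfolding EG_def by blast
      then show "\<exists>x\<in>B 0. \<exists>y\<in>B (g w). EU x y" using Ba by blast
    qed
  qed
  then show False using fU by blast
qed

end
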